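(* Let $A$ be a Noetherian commutative ring with identity, let $A[\mathbf{x}]=A[x_1,\ldots,x_n]$ be equipped with a monomial order, let $I\subset A[\mathbf{x}]$ be an ideal, let $M=A[\mathbf{x}]/I$, and let $p\subset A$ be a prime ideal. The following two statements are equivalent: (a) the natural map $f:A_p\to M_p$ is a finite map (i.e. $M_p$ is a finitely generated $A_p$-module); (b) $\mathrm{in}(I)_{x_i^\infty}\,A_p=(1)$ for each $i=1,\ldots,n$.
   Context: A monomial order $>$ is a total order on monomials such that $\mathbf{x}^E>\mathbf{x}^F$ implies $\mathbf{x}^G\mathbf{x}^E>\mathbf{x}^G\mathbf{x}^F$, and $x_i>1$ for each $i$. $\mathrm{in}(f)$ is the greatest term $c\,\mathbf{x}^E$ ($c\neq0$) of a nonzero polynomial $f$; $\mathrm{in}(I)$ is the ideal generated by all $\mathrm{in}(f)$, $f\in I$. For an ideal $J\subset A[\mathbf{x}]$ and monomial $\mathbf{x}^E$, the coefficient ideal is $J_{\mathbf{x}^E}=(c\in A\mid c\,\mathbf{x}^E\in J)\subset A$. $\mathrm{in}(I)_{x_i^\infty}$ denotes the stationary limit (union) of the ascending chain of ideals $\mathrm{in}(I)_{x_i}\subset\mathrm{in}(I)_{x_i^2}\subset\cdots$ of $A$. *)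

theory Defs
  imports Main "HOL-Library.Poly_Mapping"
begin

definition is_ideal :: "'a::comm_ring_1 set \<Rightarrow> bool" where
  "is_ideal J \<longleftrightarrow> 0 \<in> J \<and> (\<forall>x\<in>J. \<forall>y\<in>J. x + y \<in> J) \<and> (\<forall>r. \<forall>x\<in>J. r * x \<in> J)"

definition ideal_of :: "'a::comm_ring_1 set \<Rightarrow> 'a set" where
  "ideal_of S = \<Inter>{J. is_ideal J \<and> S \<subseteq> J}"

definition prime_ideal :: "'a::comm_ring_1 set \<Rightarrow> bool" where
  "prime_ideal P \<longleftrightarrow> is_ideal P \<and> 1 \<notin> P \<and> (\<forall>a b. a * b \<in> P \<longrightarrow> a \<in> P \<or> b \<in> P)"

definition noetherian_ring :: "'a::comm_ring_1 itself \<Rightarrow> bool" where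
  "noetherian_ring _ \<longleftrightarrow> (\<forall>J::'a set. is_ideal J \<longrightarrow> (\<exists>F. finite F \<and> J = ideal_of F))"

type_synonym ('v, 'a) mpoly = "('v \<Rightarrow>\<^sub>0 nat) \<Rightarrow>\<^sub>0 'a"

text \<open>Monomials are exponent vectors; multiplication of monomials is addition of exponents.
  \<open>le\<close> is the (non-strict) order relation.\<close>
definition monomial_order :: "(('v \<Rightarrow>\<^sub>0 nat) \<Rightarrow> ('v \<Rightarrow>\<^sub>0 nat) \<Rightarrow> bool) \<Rightarrow> bool" where
  "monomial_order le \<longleftrightarrow>
     (\<forall>a. le a a) \<and> (\<forall>a b. le a b \<and> le b a \<longrightarrow> a = b) \<and>
     (\<forall>a b c. le a b \<and> le b c \<longrightarrow> le a c) \<and> (\<forall>a b. le a b \<or> le b a) \<and>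
     (\<forall>E F G :: 'v \<Rightarrow>\<^sub>0 nat. le F E \<and> E \<noteq> F \<longrightarrow> le (G + F) (G + E) \<and> G + E \<noteq> G + F) \<and>
     (\<forall>i::'v. le 0 (Poly_Mapping.single i (1::nat)) \<and> Poly_Mapping.single i (1::nat) \<noteq> 0)"

definition lead_monom :: "(('v \<Rightarrow>\<^sub>0 nat) \<Rightarrow> ('v \<Rightarrow>\<^sub>0 nat) \<Rightarrow> bool) \<Rightarrow> ('v, 'a::zero) mpoly \<Rightarrow> ('v \<Rightarrow>\<^sub>0 nat)" where
  "lead_monom le f = (THE m. m \<in> Poly_Mapping.keys f \<and> (\<forall>m'\<in>Poly_Mapping.keys f. le m' m))"

definition init_term :: "(('v \<Rightarrow>\<^sub>0 nat) \<Rightarrow> ('v \<Rightarrow>\<^sub>0 nat) \<Rightarrow> bool) \<Rightarrow> ('v, 'a::zero) mpoly \<Rightarrow> ('v, 'a) mpoly" where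
  "init_term le f = Poly_Mapping.single (lead_monom le f) (Poly_Mapping.lookup f (lead_monom le f))"

definition init_ideal :: "(('v \<Rightarrow>\<^sub>0 nat) \<Rightarrow> ('v \<Rightarrow>\<^sub>0 nat) \<Rightarrow> bool) \<Rightarrow> ('v, 'a::comm_ring_1) mpoly set \<Rightarrow> ('v, 'a) mpoly set" where
  "init_ideal le I = ideal_of {init_term le f | f. f \<in> I \<and> f \<noteq> 0}"

definition coeff_ideal :: "('v, 'a::comm_ring_1) mpoly set \<Rightarrow> ('v \<Rightarrow>\<^sub>0 nat) \<Rightarrow> 'a set" where
  "coeff_ideal J E = ideal_of {c. Poly_Mapping.single E c \<in> J}"

definition coeff_ideal_inf :: "('v, 'a::comm_ring_1) mpoly set \<Rightarrow> 'v \<Rightarrow> 'a set" where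
  "coeff_ideal_inf J i = (\<Union>k\<in>{1..}. coeff_ideal J (Poly_Mapping.single i k))"

text \<open>An A-module is given by an abelian group 'm with scalar action \<open>sc\<close>; we localize the
  quotient module 'm / N (N a submodule) at the multiplicative set A - P.
  Elements of the localization are fractions (m, s) with s \<notin> P, modulo \<open>loc_eq\<close>.\<close>

definition loc_eq :: "('a::comm_ring_1 \<Rightarrow> 'm::ab_group_add \<Rightarrow> 'm) \<Rightarrow> 'm set \<Rightarrow> 'a set \<Rightarrow> 'm \<times> 'a \<Rightarrow> 'm \<times> 'a \<Rightarrow> bool" where
  "loc_eq sc N P x y \<longleftrightarrow> (\<exists>u. u \<notin> P \<and> sc (u * snd y) (fst x) - sc (u * snd x) (fst y) \<in> N)"

definition loc_add :: "('a::comm_ring_1 \<Rightarrow> 'm::ab_group_add \<Rightarrow> 'm) \<Rightarrow> 'm \<times> 'a \<Rightarrow> 'm \<times> 'a \<Rightarrow> 'm \<times> 'a" where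
  "loc_add sc x y = (sc (snd y) (fst x) + sc (snd x) (fst y), snd x * snd y)"

definition loc_smult :: "('a::comm_ring_1 \<Rightarrow> 'm::ab_group_add \<Rightarrow> 'm) \<Rightarrow> 'a \<times> 'a \<Rightarrow> 'm \<times> 'a \<Rightarrow> 'm \<times> 'a" where
  "loc_smult sc c x = (sc (fst c) (fst x), snd c * snd x)"

inductive_set loc_span :: "('a::comm_ring_1 \<Rightarrow> 'm::ab_group_add \<Rightarrow> 'm) \<Rightarrow> 'a set \<Rightarrow> ('m \<times> 'a) set \<Rightarrow> ('m \<times> 'a) set"
  for sc P G where
  zero: "(0, 1) \<in> loc_span sc P G"
| step: "x \<in> loc_span sc P G \<Longrightarrow> g \<in> G \<Longrightarrow> r \<notin> P \<Longrightarrow> loc_add sc x (loc_smult sc (a, r) g) \<in> loc_span sc P G"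

text \<open>(m'/N)_P is a finitely generated A_P-module.\<close>
definition loc_fin_gen :: "('a::comm_ring_1 \<Rightarrow> 'm::ab_group_add \<Rightarrow> 'm) \<Rightarrow> 'm set \<Rightarrow> 'a set \<Rightarrow> bool" where
  "loc_fin_gen sc N P \<longleftrightarrow>
     (\<exists>G. finite G \<and> (\<forall>g\<in>G. snd g \<notin> P) \<and>
          (\<forall>m s. s \<notin> P \<longrightarrow> (\<exists>y\<in>loc_span sc P G. loc_eq sc N P (m, s) y)))"

text \<open>The extended ideal J A_P is the unit ideal: 1/1 lies in the A_P-span of {j/1 | j \<in> J}.\<close>
definition ext_ideal_unit :: "'a::comm_ring_1 set \<Rightarrow> 'a set \<Rightarrow> bool" where
  "ext_ideal_unit J P \<longleftrightarrow>
     (\<exists>y\<in>loc_span (*) P {(j, 1) | j. j \<in> J}. loc_eq (*) {0} P (1, 1) y)"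

text \<open>A-module structure of A[x] (hence of M = A[x]/I) via constants.\<close>
definition const_smult :: "'a::comm_ring_1 \<Rightarrow> ('v, 'a) mpoly \<Rightarrow> ('v, 'a) mpoly" where
  "const_smult c f = Poly_Mapping.single 0 c * f"

end

theory Submission
  imports Defs "Jordan_Normal_Form.Char_Poly"
begin

section \<open>Monomial orders\<close>

context
  fixes le :: "('v::finite \<Rightarrow>\<^sub>0 nat) \<Rightarrow> ('v \<Rightarrow>\<^sub>0 nat) \<Rightarrow> bool"
  assumes mo: "monomial_order le"
begin

lemma mo_refl: "le a a" using mo unfolding monomial_order_def by blast
lemma mo_antisym: "le a b \<Longrightarrow> le b a \<Longrightarrow> a = b" using mo unfolding monomial_order_def by blast
lemma mo_trans: "le a b \<Longrightarrow> le b c \<Longrightarrow> le a c" using mo unfolding monomial_order_def by blast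
lemma mo_total: "le a b \<or> le b a" using mo unfolding monomial_order_def by blast
lemma mo_compat_raw: "le F E \<Longrightarrow> E \<noteq> F \<Longrightarrow> le (G + F) (G + E)"
  using mo unfolding monomial_order_def by blast
lemma mo_compat: "le F E \<Longrightarrow> le (G + F) (G + E)"
proof (cases "E = F")
  case True then show ?thesis by (simp add: mo_refl)
next
  case False then show "le F E \<Longrightarrow> ?thesis" by (rule mo_compat_raw[rotated])
qed
lemma mo_var: "le 0 (Poly_Mapping.single i 1)" using mo unfolding monomial_order_def by blast

lemma mo_zero_add:
  assumes a: "le 0 a" and b: "le 0 b" shows "le 0 (a + b)"
proof -
  have "le (a + 0) (a + b)" using b by (rule mo_compat)
  then have "le a (a + b)" by simp
  with a show ?thesis by (rule mo_trans)
qed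

lemma mo_zero_single: "le 0 (Poly_Mapping.single i k)"
proof (induction k)
  case 0 then show ?case using mo_refl by simp
next
  case (Suc k)
  have eq: "Poly_Mapping.single i (Suc k) = Poly_Mapping.single i k + Poly_Mapping.single i 1"
    by (simp add: single_add[symmetric])
  show ?case unfolding eq by (rule mo_zero_add[OF Suc.IH mo_var])
qed

lemma update_as_add:
  assumes "a \<notin> Poly_Mapping.keys f"
  shows "Poly_Mapping.update a b f = f + Poly_Mapping.single a b"
proof (rule poly_mapping_eqI)
  fix k
  show "Poly_Mapping.lookup (Poly_Mapping.update a b f) k = Poly_Mapping.lookup (f + Poly_Mapping.single a b) k"
  proof (cases "k = a")
    case True
    have "Poly_Mapping.lookup f a = 0" using assms by (simp add: in_keys_iff)
    then show ?thesis using True by (simp add: lookup_update lookup_add)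
  next
    case False then show ?thesis by (simp add: lookup_update lookup_add lookup_single_not_eq)
  qed
qed

lemma mo_zero_le: "le 0 G"
proof (induction G rule: update_induct)
  case const then show ?case by (rule mo_refl)
next
  case (update f a b)
  show ?case unfolding update_as_add[OF update(1)] by (rule mo_zero_add[OF update(3) mo_zero_single])
qed

lemma mo_le_add: "le a (a + b)"
proof -
  have "le (a + 0) (a + b)" using mo_zero_le by (rule mo_compat)
  then show ?thesis by simp
qed

lemma mo_single_mono: "k \<le> k' \<Longrightarrow> le (Poly_Mapping.single i k) (Poly_Mapping.single i k')"
proof -
  assume "k \<le> k'"
  then have eq: "Poly_Mapping.single i k' = Poly_Mapping.single i k + Poly_Mapping.single i (k' - k)"
    by (simp add: single_add[symmetric])
  show ?thesis unfolding eq by (rule mo_le_add)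
qed

lemma nat_mono_subseq:
  fixes X :: "nat \<Rightarrow> nat"
  shows "\<exists>r::nat\<Rightarrow>nat. strict_mono r \<and> (\<forall>m n. m \<le> n \<longrightarrow> X (r m) \<le> X (r n))"
proof -
  obtain f :: "nat \<Rightarrow> nat" where f: "strict_mono f" "monoseq (\<lambda>n. X (f n))" using seq_monosub by blast
  show ?thesis
  proof (cases "\<forall>m n. m \<le> n \<longrightarrow> X (f m) \<le> X (f n)")
    case True then show ?thesis using f(1) by blast
  next
    case False
    then have dec: "\<forall>m n. m \<le> n \<longrightarrow> X (f n) \<le> X (f m)" using f(2) unfolding monoseq_def by blast
    define a where "a = (LEAST y. \<exists>n. y = X (f n))"
    have "\<exists>n. a = X (f n)" unfolding a_def by (rule LeastI[of _ "X (f 0)"]) blast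
    then obtain N where N: "X (f N) = a" by auto
    have mn: "X (f N) \<le> X (f n)" for n unfolding N a_def by (rule Least_le) blast
    have const: "X (f (n + N)) = X (f N)" for n
      using dec[rule_format, of N "n + N"] mn[of "n+N"] by simp
    have sm: "strict_mono (\<lambda>n. f (n + N))" using f(1) unfolding strict_mono_def by simp
    show ?thesis
      by (rule exI[of _ "\<lambda>n. f (n + N)"]) (use sm const in simp)
  qed
qed

lemma dickson_aux:
  fixes s :: "nat \<Rightarrow> ('v \<Rightarrow>\<^sub>0 nat)"
  assumes "finite V"
  shows "\<exists>r::nat\<Rightarrow>nat. strict_mono r \<and> (\<forall>v\<in>V. \<forall>m n. m \<le> n \<longrightarrow> Poly_Mapping.lookup (s (r m)) v \<le> Poly_Mapping.lookup (s (r n)) v)"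
  using assms
proof (induction V rule: finite_induct)
  case empty then show ?case by (intro exI[of _ "id::nat\<Rightarrow>nat"]) (simp add: strict_mono_def)
next
  case (insert w V)
  from insert.IH obtain r :: "nat \<Rightarrow> nat" where r: "strict_mono r" "\<forall>v\<in>V. \<forall>m n. m \<le> n \<longrightarrow> Poly_Mapping.lookup (s (r m)) v \<le> Poly_Mapping.lookup (s (r n)) v"
    by (elim exE conjE) (rule that)
  obtain r' :: "nat \<Rightarrow> nat" where r': "strict_mono r'" "\<forall>m n. m \<le> n \<longrightarrow> Poly_Mapping.lookup (s (r (r' m))) w \<le> Poly_Mapping.lookup (s (r (r' n))) w"
    using nat_mono_subseq[of "\<lambda>n. Poly_Mapping.lookup (s (r n)) w"] by blast
  have sm: "strict_mono (\<lambda>a. r (r' a))" using r(1) r'(1) by (simp add: strict_mono_def)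
  have rm: "m \<le> n \<Longrightarrow> r' m \<le> r' n" for m n :: nat using r'(1) by (simp add: strict_mono_less_eq)
  have mono': "\<forall>v\<in>insert w V. \<forall>m n. m \<le> n \<longrightarrow> Poly_Mapping.lookup (s (r (r' m))) v \<le> Poly_Mapping.lookup (s (r (r' n))) v"
  proof (intro ballI allI impI)
    fix v and m n :: nat assume v: "v \<in> insert w V" and mn: "m \<le> n"
    show "Poly_Mapping.lookup (s (r (r' m))) v \<le> Poly_Mapping.lookup (s (r (r' n))) v"
    proof (cases "v = w")
      case True then show ?thesis using r'(2) mn by simp
    next
      case False then have "v \<in> V" using v by simp
      then show ?thesis using r(2) rm[OF mn] by blast
    qed
  qed
  show ?case by (rule exI[of _ "\<lambda>a. r (r' a)"]) (use sm mono' in blast)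
qed

lemma dickson:
  fixes s :: "nat \<Rightarrow> ('v::finite \<Rightarrow>\<^sub>0 nat)"
  shows "\<exists>i j. i < j \<and> (\<forall>v. Poly_Mapping.lookup (s i) v \<le> Poly_Mapping.lookup (s j) v)"
proof -
  obtain r :: "nat \<Rightarrow> nat" where r: "strict_mono r" "\<forall>v\<in>UNIV. \<forall>m n. m \<le> n \<longrightarrow> Poly_Mapping.lookup (s (r m)) v \<le> Poly_Mapping.lookup (s (r n)) v"
    using dickson_aux[of UNIV s] by auto
  show ?thesis using r by (intro exI[of _ "r 0"] exI[of _ "r 1"]) (auto simp: strict_mono_def)
qed

lemma mo_wf:
  shows "wf {(a, b :: 'v \<Rightarrow>\<^sub>0 nat). le a b \<and> a \<noteq> b}"
proof -
  {
    fix f :: "nat \<Rightarrow> ('v \<Rightarrow>\<^sub>0 nat)"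
    assume f: "\<forall>i. le (f (Suc i)) (f i) \<and> f (Suc i) \<noteq> f i"
    have chain: "le (f (i + Suc d)) (f i) \<and> f (i + Suc d) \<noteq> f i" for i d
    proof (induction d)
      case 0 then show ?case using f by simp
    next
      case (Suc d)
      have s1: "le (f (i + Suc (Suc d))) (f (i + Suc d))" using f[rule_format, of "i + Suc d"] by simp
      have le1: "le (f (i + Suc (Suc d))) (f i)" using mo_trans[OF s1] Suc.IH by blast
      moreover have "f (i + Suc (Suc d)) \<noteq> f i"
      proof
        assume eq: "f (i + Suc (Suc d)) = f i"
        have "le (f i) (f (i + Suc d))" using f[rule_format, of "i + Suc d"] eq by simp
        then show False using Suc.IH mo_antisym[of "f i" "f (i + Suc d)"] by simp
      qed
      ultimately show ?case by simp
    qed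
    obtain i j where ij: "i < j" "\<forall>v. Poly_Mapping.lookup (f i) v \<le> Poly_Mapping.lookup (f j) v"
      using dickson[of f] by blast
    have eq: "f i + (f j - f i) = f j"
      by (rule poly_mapping_eqI) (use ij in \<open>simp add: lookup_add lookup_minus\<close>)
    have "le (f i) (f j)" using mo_le_add[of "f i" "f j - f i"] unfolding eq .
    obtain d where "j = Suc (i + d)" using less_imp_Suc_add[OF ij(1)] by blast
    then have "le (f j) (f i)" "f j \<noteq> f i" using chain[of i d] by simp_all
    with \<open>le (f i) (f j)\<close> have False using mo_antisym[of "f i" "f j"] by simp
  }
  then show ?thesis unfolding wf_iff_no_infinite_down_chain by auto
qed

section \<open>Leading monomials\<close>

lemma finite_max_exists:
  assumes "finite S" "S \<noteq> {}"
  shows "\<exists>m\<in>S. \<forall>m'\<in>S. le m' m"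
  using assms
proof (induction S rule: finite_ne_induct)
  case (singleton x) then show ?case using mo_refl[of x] by blast
next
  case (insert x S)
  from insert.IH obtain m where m: "m \<in> S" "\<forall>m'\<in>S. le m' m" by blast
  show ?case
  proof (cases "le x m")
    case True
    have "\<forall>m'\<in>insert x S. le m' m" using True m(2) by blast
    then show ?thesis using m(1) by blast
  next
    case False
    then have mx: "le m x" using mo_total by blast
    have "le m' x" if "m' \<in> insert x S" for m'
    proof (cases "m' = x")
      case True then show ?thesis using mo_refl by simp
    next
      case False then have "le m' m" using that m(2) by simp
      then show ?thesis using mo_trans mx by blast
    qed
    then show ?thesis by blast
  qed
qed

lemma lead_monom_eq:
  assumes "m \<in> Poly_Mapping.keys f" "\<forall>m'\<in>Poly_Mapping.keys f. le m' m"
  shows "lead_monom le f = m"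
  unfolding lead_monom_def
proof (rule the_equality)
  show "m \<in> Poly_Mapping.keys f \<and> (\<forall>m'\<in>Poly_Mapping.keys f. le m' m)" using assms by blast
  fix m'' assume h: "m'' \<in> Poly_Mapping.keys f \<and> (\<forall>m'\<in>Poly_Mapping.keys f. le m' m'')"
  then have "le m'' m" "le m m''" using assms by blast+
  then show "m'' = m" by (rule mo_antisym)
qed

lemma lead_monom_prop:
  assumes "f \<noteq> 0"
  shows "lead_monom le f \<in> Poly_Mapping.keys f \<and> (\<forall>m'\<in>Poly_Mapping.keys f. le m' (lead_monom le f))"
proof -
  have "Poly_Mapping.keys f \<noteq> {}" using assms by simp
  then obtain m where "m \<in> Poly_Mapping.keys f" "\<forall>m'\<in>Poly_Mapping.keys f. le m' m"
    using finite_max_exists[of "Poly_Mapping.keys f"] by auto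
  then have m: "m \<in> Poly_Mapping.keys f" "\<forall>m'\<in>Poly_Mapping.keys f. le m' m" .
  then have "lead_monom le f = m" by (rule lead_monom_eq)
  then show ?thesis using m by simp
qed

end


section \<open>Ideals\<close>

lemma ideal_of_ideal: "is_ideal (ideal_of S)"
  unfolding is_ideal_def ideal_of_def by blast

lemma ideal_of_sup: "S \<subseteq> ideal_of S"
  unfolding ideal_of_def by blast

lemma ideal_of_least: "is_ideal J \<Longrightarrow> S \<subseteq> J \<Longrightarrow> ideal_of S \<subseteq> J"
  unfolding ideal_of_def by blast

lemma ideal_zero: "is_ideal J \<Longrightarrow> 0 \<in> J" unfolding is_ideal_def by blast
lemma ideal_add: "is_ideal J \<Longrightarrow> x \<in> J \<Longrightarrow> y \<in> J \<Longrightarrow> x + y \<in> J" unfolding is_ideal_def by blast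
lemma ideal_mult: "is_ideal J \<Longrightarrow> x \<in> J \<Longrightarrow> r * x \<in> J" unfolding is_ideal_def by blast
lemma ideal_mult2: "is_ideal J \<Longrightarrow> x \<in> J \<Longrightarrow> x * r \<in> J" using ideal_mult[of J x r] by (simp add: mult.commute)
lemma ideal_neg: "is_ideal J \<Longrightarrow> x \<in> J \<Longrightarrow> - x \<in> J" using ideal_mult[of J x "-1"] by simp
lemma ideal_diff: "is_ideal J \<Longrightarrow> x \<in> J \<Longrightarrow> y \<in> J \<Longrightarrow> x - y \<in> J"
  using ideal_add[of J x "-y"] ideal_neg[of J y] by simp
lemma ideal_sum: "is_ideal J \<Longrightarrow> (\<And>i. i \<in> A \<Longrightarrow> f i \<in> J) \<Longrightarrow> sum f A \<in> J"
proof (induction A rule: infinite_finite_induct)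
  case (infinite A) then show ?case by (simp add: ideal_zero)
next
  case empty then show ?case by (simp add: ideal_zero)
next
  case (insert x F) then show ?case by (simp add: ideal_add)
qed

lemma ideal_of_notin:
  assumes "is_ideal P" "x \<in> ideal_of S" "x \<notin> P"
  shows "\<exists>s\<in>S. s \<notin> P"
proof (rule ccontr)
  assume "\<not> (\<exists>s\<in>S. s \<notin> P)"
  then have "S \<subseteq> P" by blast
  then have "ideal_of S \<subseteq> P" using assms(1) by (rule ideal_of_least[rotated])
  then show False using assms by blast
qed

lemma prime_mult_notin: "prime_ideal P \<Longrightarrow> a \<notin> P \<Longrightarrow> b \<notin> P \<Longrightarrow> a * b \<notin> P"
  unfolding prime_ideal_def by blast
lemma prime_one: "prime_ideal P \<Longrightarrow> 1 \<notin> P" unfolding prime_ideal_def by blast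
lemma prime_zero: "prime_ideal P \<Longrightarrow> 0 \<in> P" unfolding prime_ideal_def is_ideal_def by blast
lemma prime_ideal_is: "prime_ideal P \<Longrightarrow> is_ideal P" unfolding prime_ideal_def by blast
lemma prime_nonzero: "prime_ideal P \<Longrightarrow> a \<notin> P \<Longrightarrow> a \<noteq> 0" using prime_zero by blast

lemma prime_prod_notin:
  assumes "prime_ideal P" "\<And>i. i \<in> A \<Longrightarrow> f i \<notin> P"
  shows "prod f A \<notin> P"
  using assms(2)
proof (induction A rule: infinite_finite_induct)
  case (infinite A) then show ?case using prime_one[OF assms(1)] by simp
next
  case empty then show ?case using prime_one[OF assms(1)] by simp
next
  case (insert x F) then show ?case using prime_mult_notin[OF assms(1)] by simp
qed

lemma prime_power_notin: "prime_ideal P \<Longrightarrow> a \<notin> P \<Longrightarrow> a ^ n \<notin> P"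
  using prime_prod_notin[of P "{..<n}" "\<lambda>_. a"] by simp

section \<open>Scalar action by constants\<close>

lemma cs_add_right: "const_smult c (f + g) = const_smult c f + const_smult c g"
  unfolding const_smult_def by (simp add: distrib_left)
lemma cs_add_left: "const_smult (a + b) f = const_smult a f + const_smult b f"
  unfolding const_smult_def by (simp add: single_add distrib_right)
lemma cs_diff_right: "const_smult c (f - g) = const_smult c f - const_smult c g"
  unfolding const_smult_def by (simp add: right_diff_distrib)
lemma cs_diff_left: "const_smult (a - b) f = const_smult a f - const_smult b f"
  unfolding const_smult_def by (simp add: single_diff left_diff_distrib)
lemma cs_cs: "const_smult a (const_smult b f) = const_smult (a * b) f"
  unfolding const_smult_def by (simp add: mult.assoc[symmetric] mult_single)
lemma cs_one: "const_smult 1 f = f" unfolding const_smult_def by simp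
lemma cs_zero_left: "const_smult 0 f = 0" unfolding const_smult_def by simp
lemma cs_zero_right: "const_smult c 0 = 0" unfolding const_smult_def by simp
lemma cs_sum: "const_smult c (sum f A) = (\<Sum>i\<in>A. const_smult c (f i))"
  unfolding const_smult_def by (simp add: sum_distrib_left)
lemma cs_sum_left: "const_smult (sum g A) f = (\<Sum>i\<in>A. const_smult (g i) f)"
proof (induction A rule: infinite_finite_induct)
  case (infinite A) then show ?case by (simp add: cs_zero_left)
next
  case empty then show ?case by (simp add: cs_zero_left)
next
  case (insert x F) then show ?case by (simp add: cs_add_left)
qed
lemma cs_single: "const_smult c (Poly_Mapping.single E a) = Poly_Mapping.single E (c * a)"
  unfolding const_smult_def by (simp add: mult_single)
lemma cs_mult_left: "const_smult c (f * g) = const_smult c f * g"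
  unfolding const_smult_def by (simp add: mult.assoc)
lemma cs_mult_right: "const_smult c (f * g) = f * const_smult c g"
  unfolding const_smult_def by (simp add: mult.left_commute)
lemma cs_ideal: "is_ideal I \<Longrightarrow> f \<in> I \<Longrightarrow> const_smult c f \<in> I"
  unfolding const_smult_def by (rule ideal_mult)
lemma cs_as_mult: "const_smult c f = Poly_Mapping.single 0 c * f"
  unfolding const_smult_def ..
lemma lookup_cs: "Poly_Mapping.lookup (const_smult c f) E = c * Poly_Mapping.lookup f E"
  unfolding const_smult_def mult_map_scale_conv_mult[symmetric]
  by (simp add: Poly_Mapping.map.rep_eq when_def)

lemma poly_expansion:
  "f = (\<Sum>E\<in>Poly_Mapping.keys f. Poly_Mapping.single E (Poly_Mapping.lookup f E))"
proof (rule poly_mapping_eqI)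
  fix k
  have "Poly_Mapping.lookup (\<Sum>E\<in>Poly_Mapping.keys f. Poly_Mapping.single E (Poly_Mapping.lookup f E)) k
     = (\<Sum>E\<in>Poly_Mapping.keys f. (Poly_Mapping.lookup f E when E = k))"
    by (simp add: lookup_sum lookup_single)
  also have "\<dots> = Poly_Mapping.lookup f k"
  proof (cases "k \<in> Poly_Mapping.keys f")
    case True
    then show ?thesis by (simp add: when_def sum.delta)
  next
    case False
    then have "\<And>E. E \<in> Poly_Mapping.keys f \<Longrightarrow> (Poly_Mapping.lookup f E when E = k) = 0" by (auto simp: when_def)
    then show ?thesis using False by (simp add: in_keys_iff)
  qed
  finally show "Poly_Mapping.lookup f k = Poly_Mapping.lookup (\<Sum>E\<in>Poly_Mapping.keys f. Poly_Mapping.single E (Poly_Mapping.lookup f E)) k" by simp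
qed

lemma span_char:
  fixes G :: "(('v, 'a::comm_ring_1) mpoly \<times> 'a) set"
  assumes P: "prime_ideal P" and G: "finite G" and Gs: "\<forall>g\<in>G. snd g \<notin> P" and y: "y \<in> loc_span const_smult P G"
  shows "snd y \<notin> P \<and> (\<exists>\<alpha>. fst y = (\<Sum>g\<in>G. const_smult (\<alpha> g) (fst g)))"
  using y
proof (induction rule: loc_span.induct)
  case zero
  have "(0::('v, 'a) mpoly) = (\<Sum>g\<in>G. const_smult 0 (fst g))" by (simp add: cs_zero_left)
  then show ?case using prime_one[OF P] by auto
next
  case (step x g r a)
  from step.IH obtain \<alpha> where sx: "snd x \<notin> P" and fx: "fst x = (\<Sum>h\<in>G. const_smult (\<alpha> h) (fst h))" by blast
  define \<beta> where "\<beta> h = r * snd g * \<alpha> h + (if h = g then snd x * a else 0)" for h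
  have "(\<Sum>h\<in>G. const_smult (\<beta> h) (fst h))
      = (\<Sum>h\<in>G. const_smult (r * snd g * \<alpha> h) (fst h)) + (\<Sum>h\<in>G. const_smult (if h = g then snd x * a else 0) (fst h))"
    unfolding \<beta>_def cs_add_left sum.distrib ..
  also have "(\<Sum>h\<in>G. const_smult (if h = g then snd x * a else 0) (fst h)) = (\<Sum>h\<in>G. if h = g then const_smult (snd x * a) (fst g) else 0)"
    by (rule sum.cong) (auto simp: cs_zero_left)
  also have "\<dots> = const_smult (snd x * a) (fst g)" using step.hyps(2) G by (simp add: sum.delta)
  also have "(\<Sum>h\<in>G. const_smult (r * snd g * \<alpha> h) (fst h)) = const_smult (r * snd g) (fst x)"
    unfolding fx cs_sum cs_cs ..
  finally have eq: "(\<Sum>h\<in>G. const_smult (\<beta> h) (fst h)) = const_smult (r * snd g) (fst x) + const_smult (snd x * a) (fst g)" .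
  have sg: "snd g \<notin> P" using Gs step.hyps(2) by blast
  have "snd (loc_add const_smult x (loc_smult const_smult (a, r) g)) = snd x * (r * snd g)"
    unfolding loc_add_def loc_smult_def by simp
  then have "snd (loc_add const_smult x (loc_smult const_smult (a, r) g)) \<notin> P"
    using prime_mult_notin[OF P sx prime_mult_notin[OF P step.hyps(3) sg]] by simp
  moreover have "fst (loc_add const_smult x (loc_smult const_smult (a, r) g)) = (\<Sum>h\<in>G. const_smult (\<beta> h) (fst h))"
    unfolding eq loc_add_def loc_smult_def by (simp add: cs_cs)
  ultimately show ?case by blast
qed


lemma span_char_mult:
  fixes J P :: "'a::comm_ring_1 set"
  assumes P: "prime_ideal P" and y: "y \<in> loc_span (*) P {(j, 1) | j. j \<in> J}"
  shows "snd y \<notin> P \<and> fst y \<in> ideal_of J"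
  using y
proof (induction rule: loc_span.induct)
  case zero
  then show ?case using prime_one[OF P] ideal_zero[OF ideal_of_ideal] by simp
next
  case (step x g r a)
  then obtain j where g: "g = (j, 1)" "j \<in> J" by blast
  have j: "j \<in> ideal_of J" using g(2) ideal_of_sup by blast
  have "fst (loc_add (*) x (loc_smult (*) (a, r) g)) = r * fst x + snd x * (a * j)"
    unfolding loc_add_def loc_smult_def g by simp
  also have "\<dots> \<in> ideal_of J"
    using step.IH j by (intro ideal_add ideal_of_ideal ideal_mult) auto
  finally have "fst (loc_add (*) x (loc_smult (*) (a, r) g)) \<in> ideal_of J" .
  moreover have "snd (loc_add (*) x (loc_smult (*) (a, r) g)) = snd x * r"
    unfolding loc_add_def loc_smult_def g by simp
  ultimately show ?case using prime_mult_notin[OF P _ step.hyps(3)] step.IH by simp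
qed

lemma ext_unit_elem:
  fixes J P :: "'a::comm_ring_1 set"
  assumes P: "prime_ideal P" and e: "ext_ideal_unit J P"
  shows "\<exists>j\<in>J. j \<notin> P"
proof -
  from e obtain y where y: "y \<in> loc_span (*) P {(j, 1) | j. j \<in> J}" "loc_eq (*) {0} P (1, 1) y"
    unfolding ext_ideal_unit_def by blast
  from span_char_mult[OF P y(1)] have sy: "snd y \<notin> P" and fy: "fst y \<in> ideal_of J" by auto
  from y(2) obtain u where u: "u \<notin> P" "u * snd y * 1 - u * 1 * fst y = 0"
    unfolding loc_eq_def by auto
  have "u * fst y = u * snd y" using u(2) by simp
  moreover have "u * snd y \<notin> P" using prime_mult_notin[OF P u(1) sy] .
  moreover have "u * fst y \<in> ideal_of J" using fy by (intro ideal_mult ideal_of_ideal)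
  ultimately have a: "u * fst y \<in> ideal_of J" and b: "u * fst y \<notin> P" by auto
  show ?thesis by (rule ideal_of_notin[OF prime_ideal_is[OF P] a b])
qed

lemma ext_unit_intro:
  fixes J P :: "'a::comm_ring_1 set"
  assumes P: "prime_ideal P" and j: "j \<in> J" "j \<notin> P"
  shows "ext_ideal_unit J P"
proof -
  have g: "(j, 1) \<in> {(j, 1) | j. j \<in> J}" using j(1) by blast
  have "loc_add (*) (0, 1) (loc_smult (*) (1, j) (j, 1)) \<in> loc_span (*) P {(j, 1) | j. j \<in> J}"
    by (rule loc_span.step[OF loc_span.zero g j(2)])
  moreover have "loc_add (*) (0, 1) (loc_smult (*) (1, j) (j, 1)) = (j, j)"
    unfolding loc_add_def loc_smult_def by simp
  moreover have "loc_eq (*) {0} P (1, 1) (j, j)"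
    unfolding loc_eq_def using prime_one[OF P] by (intro exI[of _ 1]) simp
  ultimately show ?thesis unfolding ext_ideal_unit_def by auto
qed


lemma Sum_any_in_ideal:
  assumes "is_ideal P" "\<And>a. g a \<in> P"
  shows "Sum_any g \<in> P"
  unfolding Sum_any.expand_set by (rule ideal_sum) (use assms in auto)

definition below :: "('v \<Rightarrow>\<^sub>0 nat) \<Rightarrow> ('v \<Rightarrow>\<^sub>0 nat) \<Rightarrow> bool" where
  "below E' E \<longleftrightarrow> (\<forall>v. Poly_Mapping.lookup E' v \<le> Poly_Mapping.lookup E v)"

lemma below_add: "below q (l + q)"
  unfolding below_def by (simp add: lookup_add)

lemma below_trans: "below a b \<Longrightarrow> below b c \<Longrightarrow> below a c"
  unfolding below_def using order_trans by blast

lemma Q_ideal: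
  fixes P :: "'a::comm_ring_1 set" and E :: "'v \<Rightarrow>\<^sub>0 nat"
  assumes P: "is_ideal P"
  shows "is_ideal {g :: ('v, 'a) mpoly. \<forall>E'. below E' E \<longrightarrow> Poly_Mapping.lookup g E' \<in> P}"
  unfolding is_ideal_def
proof (intro conjI ballI allI)
  show "0 \<in> {g :: ('v, 'a) mpoly. \<forall>E'. below E' E \<longrightarrow> Poly_Mapping.lookup g E' \<in> P}"
    using ideal_zero[OF P] by simp
next
  fix x y :: "('v, 'a) mpoly"
  assume "x \<in> {g :: ('v, 'a) mpoly. \<forall>E'. below E' E \<longrightarrow> Poly_Mapping.lookup g E' \<in> P}"
    "y \<in> {g :: ('v, 'a) mpoly. \<forall>E'. below E' E \<longrightarrow> Poly_Mapping.lookup g E' \<in> P}"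
  then show "x + y \<in> {g :: ('v, 'a) mpoly. \<forall>E'. below E' E \<longrightarrow> Poly_Mapping.lookup g E' \<in> P}"
    using ideal_add[OF P] by (simp add: lookup_add)
next
  fix r x :: "('v, 'a) mpoly"
  assume "x \<in> {g :: ('v, 'a) mpoly. \<forall>E'. below E' E \<longrightarrow> Poly_Mapping.lookup g E' \<in> P}"
  then have x: "\<forall>E'. below E' E \<longrightarrow> Poly_Mapping.lookup x E' \<in> P" by simp
  have "Poly_Mapping.lookup (r * x) E' \<in> P" if E': "below E' E" for E'
    unfolding lookup_mult
  proof (rule Sum_any_in_ideal[OF P])
    fix l
    have "(\<Sum>q. Poly_Mapping.lookup x q when E' = l + q) \<in> P"
    proof (rule Sum_any_in_ideal[OF P])
      fix q
      show "(Poly_Mapping.lookup x q when E' = l + q) \<in> P"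
      proof (cases "E' = l + q")
        case True
        then have "below q E" using below_add[of q l] E' below_trans by metis
        then show ?thesis using x True by simp
      next
        case False then show ?thesis using ideal_zero[OF P] by simp
      qed
    qed
    then show "Poly_Mapping.lookup r l * (\<Sum>q. Poly_Mapping.lookup x q when E' = l + q) \<in> P"
      by (rule ideal_mult[OF P])
  qed
  then show "r * x \<in> {g :: ('v, 'a) mpoly. \<forall>E'. below E' E \<longrightarrow> Poly_Mapping.lookup g E' \<in> P}" by simp
qed

lemma below_single: "below E' (Poly_Mapping.single i k) \<Longrightarrow> E' = Poly_Mapping.single i (Poly_Mapping.lookup E' i)"
  unfolding below_def
  by (rule poly_mapping_eqI) (metis le_zero_eq lookup_single_eq lookup_single_not_eq)

context
  fixes le :: "('v::finite \<Rightarrow>\<^sub>0 nat) \<Rightarrow> ('v \<Rightarrow>\<^sub>0 nat) \<Rightarrow> bool"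
    and I :: "('v, 'a::comm_ring_1) mpoly set"
    and P :: "'a set"
  assumes mo: "monomial_order le"
    and I: "is_ideal I"
    and P: "prime_ideal P"
begin

lemma init_ideal_extract:
  assumes c: "Poly_Mapping.single E c \<in> init_ideal le I" "c \<notin> P"
  shows "\<exists>f\<in>I. f \<noteq> 0 \<and> below (lead_monom le f) E \<and> Poly_Mapping.lookup f (lead_monom le f) \<notin> P"
proof (rule ccontr)
  assume H: "\<not> ?thesis"
  let ?Q = "{g :: ('v, 'a) mpoly. \<forall>E'. below E' E \<longrightarrow> Poly_Mapping.lookup g E' \<in> P}"
  have Qi: "is_ideal ?Q" by (rule Q_ideal[OF prime_ideal_is[OF P]])
  have "{init_term le f | f. f \<in> I \<and> f \<noteq> 0} \<subseteq> ?Q"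
  proof clarify
    fix f E' assume f: "f \<in> I" "f \<noteq> 0" and E': "below E' E"
    show "Poly_Mapping.lookup (init_term le f) E' \<in> P"
    proof (cases "E' = lead_monom le f")
      case True
      then show ?thesis using H f E' unfolding init_term_def by auto
    next
      case False
      then show ?thesis unfolding init_term_def using prime_zero[OF P] by (simp add: lookup_single_not_eq)
    qed
  qed
  then have "init_ideal le I \<subseteq> ?Q" unfolding init_ideal_def by (rule ideal_of_least[OF Qi])
  then have "Poly_Mapping.single E c \<in> ?Q" using c(1) by blast
  then have "c \<in> P" unfolding below_def by auto
  then show False using c(2) by blast
qed

lemma coeff_extract:
  assumes j: "j \<in> coeff_ideal_inf (init_ideal le I) i" "j \<notin> P"
  shows "\<exists>f k. f \<in> I \<and> f \<noteq> 0 \<and> lead_monom le f = Poly_Mapping.single i k \<and> Poly_Mapping.lookup f (lead_monom le f) \<notin> P"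
proof -
  from j(1) obtain k where "j \<in> coeff_ideal (init_ideal le I) (Poly_Mapping.single i k)"
    unfolding coeff_ideal_inf_def by blast
  then have "j \<in> ideal_of {c. Poly_Mapping.single (Poly_Mapping.single i k) c \<in> init_ideal le I}"
    unfolding coeff_ideal_def .
  from ideal_of_notin[OF prime_ideal_is[OF P] this j(2)] obtain c where
    c: "Poly_Mapping.single (Poly_Mapping.single i k) c \<in> init_ideal le I" "c \<notin> P" by blast
  from init_ideal_extract[OF c] obtain f where
    f: "f \<in> I" "f \<noteq> 0" "below (lead_monom le f) (Poly_Mapping.single i k)" "Poly_Mapping.lookup f (lead_monom le f) \<notin> P"
    by blast
  have "lead_monom le f = Poly_Mapping.single i (Poly_Mapping.lookup (lead_monom le f) i)"
    by (rule below_single[OF f(3)])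
  then show ?thesis using f by blast
qed

end


definition Box :: "('v \<Rightarrow> nat) \<Rightarrow> ('v \<Rightarrow>\<^sub>0 nat) set" where
  "Box k = {E. \<forall>v. Poly_Mapping.lookup E v < k v}"

definition SB :: "('v \<Rightarrow> nat) \<Rightarrow> (('v \<Rightarrow>\<^sub>0 nat) \<Rightarrow> 'a::comm_ring_1) \<Rightarrow> ('v, 'a) mpoly" where
  "SB k \<alpha> = (\<Sum>E\<in>Box k. const_smult (\<alpha> E) (Poly_Mapping.single E 1))"

definition red :: "('v \<Rightarrow> nat) \<Rightarrow> ('v, 'a::comm_ring_1) mpoly set \<Rightarrow> 'a set \<Rightarrow> ('v, 'a) mpoly \<Rightarrow> bool" where
  "red k I P m \<longleftrightarrow> (\<exists>d \<alpha>. d \<notin> P \<and> const_smult d m - SB k \<alpha> \<in> I)"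

lemma finite_Box: "finite (Box (k :: 'v::finite \<Rightarrow> nat))"
proof -
  have "Box k \<subseteq> Abs_poly_mapping ` (PiE UNIV (\<lambda>v. {..<k v}))"
  proof
    fix E assume E: "E \<in> Box k"
    have "E = Abs_poly_mapping (Poly_Mapping.lookup E)" by (simp add: lookup_inverse)
    moreover have "Poly_Mapping.lookup E \<in> PiE UNIV (\<lambda>v. {..<k v})" using E unfolding Box_def by auto
    ultimately show "E \<in> Abs_poly_mapping ` (PiE UNIV (\<lambda>v. {..<k v}))" by blast
  qed
  moreover have "finite (PiE (UNIV :: 'v set) (\<lambda>v. {..<k v}))" by (rule finite_PiE) auto
  ultimately show ?thesis using finite_subset by blast
qed

lemma SB_add: "SB k \<alpha> + SB k \<beta> = SB k (\<lambda>E. \<alpha> E + \<beta> E)"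
  unfolding SB_def cs_add_left sum.distrib ..

lemma SB_cs: "const_smult c (SB k \<alpha>) = SB k (\<lambda>E. c * \<alpha> E)"
  unfolding SB_def cs_sum cs_cs ..

lemma SB_zero: "SB k (\<lambda>E. 0) = 0"
  unfolding SB_def cs_zero_left by simp

context
  fixes I :: "('v::finite, 'a::comm_ring_1) mpoly set"
    and P :: "'a set"
    and k :: "'v \<Rightarrow> nat"
  assumes I: "is_ideal I"
    and P: "prime_ideal P"
begin

lemma red_zero: "red k I P 0"
  unfolding red_def using prime_one[OF P] ideal_zero[OF I]
  by (intro exI[of _ 1] exI[of _ "\<lambda>E. 0"]) (simp add: SB_zero cs_zero_right)

lemma red_add:
  assumes "red k I P m1" "red k I P m2"
  shows "red k I P (m1 + m2)"
proof -
  from assms obtain d1 \<alpha>1 d2 \<alpha>2 where h: "d1 \<notin> P" "const_smult d1 m1 - SB k \<alpha>1 \<in> I"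
    "d2 \<notin> P" "const_smult d2 m2 - SB k \<alpha>2 \<in> I" unfolding red_def by blast
  have "const_smult (d2 * d1) (m1 + m2) - SB k (\<lambda>E. d2 * \<alpha>1 E + d1 * \<alpha>2 E)
      = const_smult d2 (const_smult d1 m1 - SB k \<alpha>1) + const_smult d1 (const_smult d2 m2 - SB k \<alpha>2)"
    by (simp add: cs_diff_right cs_add_right cs_cs SB_cs SB_add[symmetric] mult.commute)
  also have "\<dots> \<in> I" using h by (intro ideal_add[OF I] cs_ideal[OF I])
  finally show ?thesis unfolding red_def using prime_mult_notin[OF P h(3) h(1)] by blast
qed

lemma red_cs:
  assumes "red k I P m"
  shows "red k I P (const_smult a m)"
proof -
  from assms obtain d \<alpha> where h: "d \<notin> P" "const_smult d m - SB k \<alpha> \<in> I" unfolding red_def by blast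
  have "const_smult d (const_smult a m) - SB k (\<lambda>E. a * \<alpha> E) = const_smult a (const_smult d m - SB k \<alpha>)"
    by (simp add: cs_diff_right cs_cs SB_cs mult.commute)
  also have "\<dots> \<in> I" using h by (intro cs_ideal[OF I])
  finally show ?thesis unfolding red_def using h(1) by blast
qed

lemma red_sum:
  "(\<And>x. x \<in> A \<Longrightarrow> red k I P (g x)) \<Longrightarrow> red k I P (sum g A)"
proof (induction A rule: infinite_finite_induct)
  case (infinite A) then show ?case using red_zero by simp
next
  case empty then show ?case using red_zero by simp
next
  case (insert x F) then show ?case using red_add by simp
qed

lemma red_modI:
  assumes "m - m' \<in> I" "red k I P m'"
  shows "red k I P m"
proof -
  from assms obtain d \<alpha> where h: "d \<notin> P" "const_smult d m' - SB k \<alpha> \<in> I" unfolding red_def by blast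
  have "const_smult d m - SB k \<alpha> = const_smult d (m - m') + (const_smult d m' - SB k \<alpha>)"
    by (simp add: cs_diff_right)
  also have "\<dots> \<in> I" using h assms(1) by (intro ideal_add[OF I] cs_ideal[OF I])
  finally show ?thesis unfolding red_def using h(1) by blast
qed

lemma red_cancel:
  assumes "c \<notin> P" "red k I P (const_smult c m)"
  shows "red k I P m"
proof -
  from assms obtain d \<alpha> where h: "d \<notin> P" "const_smult d (const_smult c m) - SB k \<alpha> \<in> I" unfolding red_def by blast
  then have "const_smult (d * c) m - SB k \<alpha> \<in> I" by (simp add: cs_cs)
  then show ?thesis unfolding red_def using prime_mult_notin[OF P h(1) assms(1)] by blast
qed

lemma red_box:
  assumes "E \<in> Box k"
  shows "red k I P (Poly_Mapping.single E 1)"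
proof -
  have "SB k (\<lambda>E'. if E' = E then 1 else 0) = (\<Sum>E'\<in>Box k. if E' = E then Poly_Mapping.single E 1 else 0)"
    unfolding SB_def by (rule sum.cong) (auto simp: cs_one cs_zero_left)
  also have "\<dots> = Poly_Mapping.single E 1" using assms by (simp add: sum.delta[OF finite_Box] sum.delta'[OF finite_Box])
  finally have eq: "SB k (\<lambda>E'. if E' = E then 1 else 0) = Poly_Mapping.single E 1" .
  have "const_smult 1 (Poly_Mapping.single E 1) - SB k (\<lambda>E'. if E' = E then 1 else 0) = 0"
    unfolding eq cs_one by simp
  then show ?thesis unfolding red_def using prime_one[OF P] ideal_zero[OF I] by metis
qed

end


lemma cs_neg_one: "const_smult (-1) x = - x"
  unfolding const_smult_def by (simp add: single_uminus)

lemma single_as_cs: "Poly_Mapping.single E a = const_smult a (Poly_Mapping.single E 1)"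
  by (simp add: cs_single)

context
  fixes le :: "('v::finite \<Rightarrow>\<^sub>0 nat) \<Rightarrow> ('v \<Rightarrow>\<^sub>0 nat) \<Rightarrow> bool"
    and I :: "('v, 'a::comm_ring_1) mpoly set"
    and P :: "'a set"
    and k :: "'v \<Rightarrow> nat"
    and f :: "'v \<Rightarrow> ('v, 'a) mpoly"
  assumes mo: "monomial_order le"
    and I: "is_ideal I"
    and P: "prime_ideal P"
    and fI: "\<And>i. f i \<in> I"
    and fnz: "\<And>i. f i \<noteq> 0"
    and flm: "\<And>i. lead_monom le (f i) = Poly_Mapping.single i (k i)"
    and flc: "\<And>i. Poly_Mapping.lookup (f i) (Poly_Mapping.single i (k i)) \<notin> P"
begin

lemma red_monom: "red k I P (Poly_Mapping.single E 1)"
proof (induction E rule: wf_induct[OF mo_wf[OF mo]])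
  case (1 E)
  show ?case
  proof (cases "E \<in> Box k")
    case True then show ?thesis by (rule red_box[OF I P])
  next
    case False
    then obtain i where ki: "k i \<le> Poly_Mapping.lookup E i" unfolding Box_def by (auto simp: not_less)
    define L where "L = Poly_Mapping.single i (k i)"
    define D where "D = E - L"
    have DL: "D + L = E"
    proof (rule poly_mapping_eqI)
      fix v show "Poly_Mapping.lookup (D + L) v = Poly_Mapping.lookup E v"
        unfolding D_def L_def using ki by (cases "i = v") (simp_all add: lookup_add lookup_minus lookup_single_not_eq)
    qed
    define fi where "fi = f i"
    define c where "c = Poly_Mapping.lookup fi L"
    have lp: "L \<in> Poly_Mapping.keys fi" "\<forall>m'\<in>Poly_Mapping.keys fi. le m' L"
      using lead_monom_prop[OF mo fnz[of i]] flm[of i] unfolding fi_def L_def by auto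
    have split: "fi = Poly_Mapping.single L c + (\<Sum>F\<in>Poly_Mapping.keys fi - {L}. Poly_Mapping.single F (Poly_Mapping.lookup fi F))"
      unfolding c_def
      by (subst poly_expansion[of fi]) (simp add: sum.remove[OF finite_keys lp(1)])
    define R where "R = (\<Sum>F\<in>Poly_Mapping.keys fi - {L}. Poly_Mapping.single (D + F) (Poly_Mapping.lookup fi F))"
    have g: "Poly_Mapping.single D 1 * fi = Poly_Mapping.single E c + R"
      unfolding R_def
      by (subst split) (simp add: distrib_left sum_distrib_left mult_single DL)
    have gI: "Poly_Mapping.single D 1 * fi \<in> I" unfolding fi_def by (rule ideal_mult[OF I fI])
    have "red k I P (Poly_Mapping.single (D + F) (Poly_Mapping.lookup fi F))" if F: "F \<in> Poly_Mapping.keys fi - {L}" for F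
    proof -
      have "le F L" "F \<noteq> L" using F lp(2) by auto
      then have "le (D + F) (D + L)" "D + F \<noteq> D + L" using mo_compat[OF mo] by auto
      then have "(D + F, E) \<in> {(a, b). le a b \<and> a \<noteq> b}" using DL by simp
      then have "red k I P (Poly_Mapping.single (D + F) 1)" using "1.IH" by blast
      then show ?thesis by (subst single_as_cs) (rule red_cs[OF I P])
    qed
    then have "red k I P R" unfolding R_def by (rule red_sum[OF I P])
    then have "red k I P (- R)" using red_cs[OF I P, where m=R and a="-1"] by (simp add: cs_neg_one)
    moreover have "Poly_Mapping.single E c - (- R) \<in> I" using g gI by simp
    ultimately have "red k I P (Poly_Mapping.single E c)" using red_modI[OF I P] by blast
    then have "red k I P (const_smult c (Poly_Mapping.single E 1))" by (simp add: cs_single)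
    moreover have "c \<notin> P" unfolding c_def fi_def L_def by (rule flc)
    ultimately show ?thesis using red_cancel[OF I P] by blast
  qed
qed

lemma red_all: "red k I P m"
proof -
  have "red k I P (\<Sum>E\<in>Poly_Mapping.keys m. Poly_Mapping.single E (Poly_Mapping.lookup m E))"
    by (rule red_sum[OF I P]) (subst single_as_cs, rule red_cs[OF I P red_monom])
  then show ?thesis using poly_expansion[of m] by simp
qed

lemma span_build:
  assumes B: "B \<subseteq> Box k" and e: "e \<notin> P"
  shows "\<exists>y\<in>loc_span const_smult P ((\<lambda>E. (Poly_Mapping.single E 1, 1)) ` Box k).
           snd y \<notin> P \<and> const_smult e (fst y) = const_smult (snd y) (\<Sum>E\<in>B. const_smult (\<alpha> E) (Poly_Mapping.single E 1))"
proof -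
  have "finite B" using B finite_Box finite_subset by blast
  then show ?thesis using B
  proof (induction B rule: finite_induct)
    case empty
    have "(0, 1) \<in> loc_span const_smult P ((\<lambda>E. (Poly_Mapping.single E 1, 1)) ` Box k)" by (rule loc_span.zero)
    then show ?case using prime_one[OF P] by (intro bexI[of _ "(0, 1)"]) (simp_all add: cs_zero_right)
  next
    case (insert E B)
    then obtain y where y: "y \<in> loc_span const_smult P ((\<lambda>E. (Poly_Mapping.single E 1, 1)) ` Box k)"
      "snd y \<notin> P" "const_smult e (fst y) = const_smult (snd y) (\<Sum>E\<in>B. const_smult (\<alpha> E) (Poly_Mapping.single E 1))"
      by blast
    have gE: "(Poly_Mapping.single E 1, 1) \<in> (\<lambda>E. (Poly_Mapping.single E 1, 1)) ` Box k" using insert by blast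
    define y' where "y' = loc_add const_smult y (loc_smult const_smult (\<alpha> E, e) (Poly_Mapping.single E 1, 1))"
    have y'span: "y' \<in> loc_span const_smult P ((\<lambda>E. (Poly_Mapping.single E 1, 1)) ` Box k)"
      unfolding y'_def by (rule loc_span.step[OF y(1) gE e])
    have sy': "snd y' = snd y * e" unfolding y'_def loc_add_def loc_smult_def by simp
    have fy': "fst y' = const_smult e (fst y) + const_smult (snd y) (const_smult (\<alpha> E) (Poly_Mapping.single E 1))"
      unfolding y'_def loc_add_def loc_smult_def by simp
    have "const_smult e (fst y') = const_smult e (const_smult (snd y) (\<Sum>E\<in>B. const_smult (\<alpha> E) (Poly_Mapping.single E 1)))
          + const_smult (e * snd y) (const_smult (\<alpha> E) (Poly_Mapping.single E 1))"
      unfolding fy' cs_add_right y(3) by (simp add: cs_cs ac_simps)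
    also have "\<dots> = const_smult (snd y') (\<Sum>E\<in>insert E B. const_smult (\<alpha> E) (Poly_Mapping.single E 1))"
      using insert.hyps by (simp add: sy' cs_cs cs_add_right ac_simps)
    finally have eqy: "const_smult e (fst y') = const_smult (snd y') (\<Sum>E\<in>insert E B. const_smult (\<alpha> E) (Poly_Mapping.single E 1))" .
    moreover have "snd y' \<notin> P" using sy' prime_mult_notin[OF P y(2) e] by simp
    ultimately show ?case using y'span by blast
  qed
qed

lemma fin_gen: "loc_fin_gen const_smult I P"
  unfolding loc_fin_gen_def
proof (intro exI conjI allI impI)
  show "finite ((\<lambda>E. (Poly_Mapping.single E 1, 1 :: 'a)) ` Box k)" using finite_Box by blast
  show "\<forall>g\<in>(\<lambda>E. (Poly_Mapping.single E 1, 1 :: 'a)) ` Box k. snd g \<notin> P" using prime_one[OF P] by auto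
next
  fix m s assume s: "s \<notin> P"
  obtain d \<alpha> where d: "d \<notin> P" "const_smult d m - SB k \<alpha> \<in> I" using red_all unfolding red_def by blast
  have sd: "s * d \<notin> P" using prime_mult_notin[OF P s d(1)] .
  obtain y where y: "y \<in> loc_span const_smult P ((\<lambda>E. (Poly_Mapping.single E 1, 1)) ` Box k)"
    "snd y \<notin> P" "const_smult (s * d) (fst y) = const_smult (snd y) (SB k \<alpha>)"
    using span_build[OF order_refl sd, of \<alpha>] unfolding SB_def by blast
  have "const_smult (d * snd y) m - const_smult (d * s) (fst y)
      = const_smult (snd y) (const_smult d m - SB k \<alpha>)"
  proof -
    have "const_smult (d * s) (fst y) = const_smult (snd y) (SB k \<alpha>)" using y(3) by (simp add: ac_simps)
    then show ?thesis by (simp add: cs_diff_right cs_cs ac_simps)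
  qed
  also have "\<dots> \<in> I" by (rule cs_ideal[OF I d(2)])
  finally have "loc_eq const_smult I P (m, s) y"
    unfolding loc_eq_def using d(1) by (intro exI[of _ d]) simp
  then show "\<exists>y\<in>loc_span const_smult P ((\<lambda>E. (Poly_Mapping.single E 1, 1)) ` Box k). loc_eq const_smult I P (m, s) y"
    using y(1) by blast
qed

end


lemma single0_hom: "comm_ring_hom (Poly_Mapping.single 0 :: 'a::comm_ring_1 \<Rightarrow> ('v, 'a) mpoly)"
  by unfold_locales (simp_all add: single_add mult_single)

lemma mat_vec_entry:
  assumes "M \<in> carrier_mat n n" "v \<in> carrier_vec n" "j < n"
  shows "(M *\<^sub>v v) $ j = (\<Sum>l<n. M $$ (j, l) * v $ l)"
  using assms by (simp add: scalar_prod_def row_def atLeast0LessThan)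

lemma T_power: "Poly_Mapping.single (Poly_Mapping.single i 1) c ^ k = Poly_Mapping.single (Poly_Mapping.single i k) (c ^ k)"
proof (induction k)
  case 0 then show ?case by simp
next
  case (Suc k)
  then show ?case by (simp add: mult_single single_add[symmetric] mult.commute)
qed

lemma lin_rel:
  fixes G :: "(('v, 'a::comm_ring_1) mpoly \<times> 'a) set" and gs
  assumes P: "prime_ideal P" and G: "finite G" "\<forall>g\<in>G. snd g \<notin> P"
    and sp: "\<forall>m s. s \<notin> P \<longrightarrow> (\<exists>y\<in>loc_span const_smult P G. loc_eq const_smult I P (m, s) y)"
    and gs: "distinct gs" "set gs = G"
  shows "\<exists>w \<beta>. w \<notin> P \<and> const_smult w m - (\<Sum>l<length gs. const_smult (\<beta> l) (fst (gs ! l))) \<in> I"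
proof -
  obtain y where y: "y \<in> loc_span const_smult P G" "loc_eq const_smult I P (m, 1) y"
    using sp prime_one[OF P] by blast
  from span_char[OF P G y(1)] obtain \<alpha> where sy: "snd y \<notin> P" and fy: "fst y = (\<Sum>g\<in>G. const_smult (\<alpha> g) (fst g))" by blast
  from y(2) obtain u where u: "u \<notin> P" "const_smult (u * snd y) m - const_smult (u * 1) (fst y) \<in> I"
    unfolding loc_eq_def by auto
  have bij: "bij_betw ((!) gs) {..<length gs} G" by (rule bij_betw_nth) (use gs in auto)
  have "fst y = (\<Sum>l<length gs. const_smult (\<alpha> (gs ! l)) (fst (gs ! l)))"
    unfolding fy by (rule sum.reindex_bij_betw[OF bij, symmetric])
  then have "const_smult (u * snd y) m - (\<Sum>l<length gs. const_smult (u * \<alpha> (gs ! l)) (fst (gs ! l))) \<in> I"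
    using u(2) by (simp add: cs_sum cs_cs)
  then show ?thesis using prime_mult_notin[OF P u(1) sy]
    by (intro exI[of _ "u * snd y"] exI[of _ "\<lambda>l. u * \<alpha> (gs ! l)"] conjI)
qed

lemma smult_one_mat_vec_entry:
  fixes a :: "'a::comm_ring_1"
  assumes "v \<in> carrier_vec n" "j < n"
  shows "((a \<cdot>\<^sub>m 1\<^sub>m n) *\<^sub>v v) $ j = a * v $ j"
proof -
  have "((a \<cdot>\<^sub>m 1\<^sub>m n) *\<^sub>v v) $ j = (\<Sum>l<n. (a \<cdot>\<^sub>m 1\<^sub>m n) $$ (j, l) * v $ l)"
    by (rule mat_vec_entry) (use assms in auto)
  also have "\<dots> = (\<Sum>l<n. if l = j then a * v $ j else 0)"
    by (rule sum.cong) (use assms in auto)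
  also have "\<dots> = a * v $ j" using assms by simp
  finally show ?thesis .
qed

context
  fixes le :: "('v::finite \<Rightarrow>\<^sub>0 nat) \<Rightarrow> ('v \<Rightarrow>\<^sub>0 nat) \<Rightarrow> bool"
    and I :: "('v, 'a::comm_ring_1) mpoly set"
    and P :: "'a set"
  assumes mo: "monomial_order le"
    and I: "is_ideal I"
    and P: "prime_ideal P"
begin

lemma fin_gen_imp:
  assumes fg: "loc_fin_gen const_smult I P"
  shows "ext_ideal_unit (coeff_ideal_inf (init_ideal le I) i) P"
proof -
  from fg obtain G where G: "finite G" "\<forall>g\<in>G. snd g \<notin> P"
    and sp: "\<forall>m s. s \<notin> P \<longrightarrow> (\<exists>y\<in>loc_span const_smult P G. loc_eq const_smult I P (m, s) y)"
    unfolding loc_fin_gen_def by blast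
  obtain gs where gs: "distinct gs" "set gs = G" using finite_distinct_list[OF G(1)] by blast
  define n where "n = length gs"
  define mm where "mm l = fst (gs ! l)" for l
  define X :: "('v, 'a) mpoly" where "X = Poly_Mapping.single (Poly_Mapping.single i 1) 1"
  have rel: "\<exists>w \<beta>. w \<notin> P \<and> const_smult w m - (\<Sum>l<n. const_smult (\<beta> l) (mm l)) \<in> I" for m
    using lin_rel[OF P G sp gs, of m] unfolding n_def mm_def .
  have "\<forall>j. \<exists>wb. fst wb \<notin> P \<and> const_smult (fst wb) (X * mm j) - (\<Sum>l<n. const_smult (snd wb l) (mm l)) \<in> I"
  proof
    fix j
    obtain w \<beta> where "w \<notin> P" "const_smult w (X * mm j) - (\<Sum>l<n. const_smult (\<beta> l) (mm l)) \<in> I"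
      using rel[of "X * mm j"] by blast
    then show "\<exists>wb. fst wb \<notin> P \<and> const_smult (fst wb) (X * mm j) - (\<Sum>l<n. const_smult (snd wb l) (mm l)) \<in> I"
      by (intro exI[of _ "(w, \<beta>)"]) simp
  qed
  from choice[OF this] obtain F where F: "\<forall>j. fst (F j) \<notin> P \<and> const_smult (fst (F j)) (X * mm j) - (\<Sum>l<n. const_smult (snd (F j) l) (mm l)) \<in> I"
    by (elim exE) (rule that)
  define W where "W j = fst (F j)" for j
  define Bt where "Bt j = snd (F j)" for j
  have W: "W j \<notin> P" for j using F unfolding W_def by blast
  have WB: "const_smult (W j) (X * mm j) - (\<Sum>l<n. const_smult (Bt j l) (mm l)) \<in> I" for j
    using F unfolding W_def Bt_def by blast
  obtain w0 \<beta>0 where w0: "w0 \<notin> P" "const_smult w0 1 - (\<Sum>l<n. const_smult (\<beta>0 l) (mm l)) \<in> I"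
    using rel[of 1] by blast
  define c where "c = (\<Prod>j<n. W j)"
  have c: "c \<notin> P" unfolding c_def by (rule prime_prod_notin[OF P W])
  define b where "b j l = (\<Prod>j'\<in>{..<n} - {j}. W j') * Bt j l" for j l
  define T :: "('v, 'a) mpoly" where "T = Poly_Mapping.single (Poly_Mapping.single i 1) c"
  have rowrel: "T * mm j - (\<Sum>l<n. const_smult (b j l) (mm l)) \<in> I" if j: "j < n" for j
  proof -
    have cj: "c = (\<Prod>j'\<in>{..<n} - {j}. W j') * W j"
      unfolding c_def using j by (simp add: prod.remove mult.commute)
    have TX: "T * mm j = const_smult c (X * mm j)"
      unfolding T_def X_def cs_mult_left cs_single by simp
    have "T * mm j - (\<Sum>l<n. const_smult (b j l) (mm l))
        = const_smult (\<Prod>j'\<in>{..<n} - {j}. W j') (const_smult (W j) (X * mm j) - (\<Sum>l<n. const_smult (Bt j l) (mm l)))"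
      unfolding TX cj b_def by (simp add: cs_diff_right cs_sum cs_cs)
    also have "\<dots> \<in> I" by (rule cs_ideal[OF I WB])
    finally show ?thesis .
  qed
  define Bm :: "'a mat" where "Bm = mat n n (\<lambda>(j, l). b j l)"
  define Bh :: "('v, 'a) mpoly mat" where "Bh = map_mat (Poly_Mapping.single 0) Bm"
  define M :: "('v, 'a) mpoly mat" where "M = mat n n (\<lambda>(j, l). (if j = l then T else 0) - Poly_Mapping.single 0 (b j l))"
  define v :: "('v, 'a) mpoly vec" where "v = vec n mm"
  have Bm: "Bm \<in> carrier_mat n n" unfolding Bm_def by simp
  have Mc: "M \<in> carrier_mat n n" unfolding M_def by simp
  have vc: "v \<in> carrier_vec n" unfolding v_def by simp
  have Mv: "(M *\<^sub>v v) $ j \<in> I" if j: "j < n" for j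
  proof -
    have "(M *\<^sub>v v) $ j = (\<Sum>l<n. M $$ (j, l) * v $ l)" by (rule mat_vec_entry[OF Mc vc j])
    also have "\<dots> = (\<Sum>l<n. (if l = j then T * mm j else 0) - const_smult (b j l) (mm l))"
      by (rule sum.cong) (use j in \<open>auto simp: M_def v_def cs_as_mult left_diff_distrib\<close>)
    also have "\<dots> = T * mm j - (\<Sum>l<n. const_smult (b j l) (mm l))"
      using j by (simp add: sum_subtractf)
    finally show ?thesis using rowrel[OF j] by simp
  qed
  have detv: "det M * mm j \<in> I" if j: "j < n" for j
  proof -
    obtain adj: "adj_mat M \<in> carrier_mat n n" "adj_mat M * M = det M \<cdot>\<^sub>m 1\<^sub>m n"
      using adj_mat[OF Mc] by blast
    have "det M * mm j = ((det M \<cdot>\<^sub>m 1\<^sub>m n) *\<^sub>v v) $ j"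
      using smult_one_mat_vec_entry[OF vc j] j by (simp add: v_def)
    also have "\<dots> = (adj_mat M *\<^sub>v (M *\<^sub>v v)) $ j"
      unfolding adj(2)[symmetric] by (rule arg_cong[where f="\<lambda>x. x $ j"], rule assoc_mult_mat_vec[OF adj(1) Mc vc])
    also have "\<dots> = (\<Sum>l<n. adj_mat M $$ (j, l) * (M *\<^sub>v v) $ l)"
      by (rule mat_vec_entry[OF adj(1) _ j]) (use Mc vc in simp)
    also have "\<dots> \<in> I" using Mv by (intro ideal_sum[OF I] ideal_mult[OF I]) auto
    finally show ?thesis .
  qed
  have det0: "const_smult w0 (det M) \<in> I"
  proof -
    have S: "det M * (\<Sum>l<n. const_smult (\<beta>0 l) (mm l)) \<in> I"
      unfolding sum_distrib_left
      by (rule ideal_sum[OF I]) (simp add: cs_mult_right[symmetric] cs_ideal[OF I] detv)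
    have "const_smult w0 (det M) = det M * (const_smult w0 1 - (\<Sum>l<n. const_smult (\<beta>0 l) (mm l))) + det M * (\<Sum>l<n. const_smult (\<beta>0 l) (mm l))"
      by (simp add: right_diff_distrib cs_mult_right[symmetric])
    also have "\<dots> \<in> I" by (rule ideal_add[OF I ideal_mult[OF I w0(2)] S])
    finally show ?thesis .
  qed
  define pc where "pc k = coeff (char_poly Bm) k" for k
  have pcn: "degree (char_poly Bm) = n" "pc n = 1" using degree_monic_char_poly[OF Bm] unfolding pc_def by auto
  have Meq: "M = map_mat (\<lambda>p. poly p T) (char_poly_matrix Bh)"
    by (rule eq_matI) (auto simp: M_def Bh_def Bm_def char_poly_matrix_def single_uminus)
  have "det M = poly (char_poly Bh) T"
    unfolding Meq char_poly_def by (rule comm_ring_hom.hom_det[OF poly_hom.comm_ring_hom_axioms])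
  also have "char_poly Bh = map_poly (Poly_Mapping.single 0) (char_poly Bm)"
    unfolding Bh_def by (rule comm_ring_hom.char_poly_hom[OF single0_hom Bm])
  also have "poly (map_poly (Poly_Mapping.single 0) (char_poly Bm)) T = (\<Sum>k\<le>n. T ^ k * Poly_Mapping.single 0 (pc k))"
    using eval_poly_as_sum[of "Poly_Mapping.single 0" "char_poly Bm" T] pcn(1)
    unfolding eval_poly_def pc_def by simp
  finally have detM: "det M = (\<Sum>k\<le>n. Poly_Mapping.single (Poly_Mapping.single i k) (c ^ k * pc k))"
    unfolding T_def T_power by (simp add: mult_single)
  define H where "H = const_smult w0 (det M) * X"
  have HI: "H \<in> I" unfolding H_def by (rule ideal_mult2[OF I det0])
  define a where "a k = w0 * (c ^ k * pc k)" for k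
  have Heq: "H = (\<Sum>k\<le>n. Poly_Mapping.single (Poly_Mapping.single i (Suc k)) (a k))"
    unfolding H_def detM cs_sum cs_single X_def sum_distrib_right a_def
    by (simp add: mult_single single_add[symmetric])
  define L where "L = Poly_Mapping.single i (Suc n)"
  have lookH: "Poly_Mapping.lookup H E = (\<Sum>k\<le>n. (a k when Poly_Mapping.single i (Suc k) = E))" for E
    unfolding Heq by (simp add: lookup_sum lookup_single)
  have "Poly_Mapping.lookup H L = (\<Sum>k\<le>n. (a k when k = n))"
    unfolding lookH L_def by (rule sum.cong) (auto simp: inj_eq[OF inj_single])
  also have "\<dots> = a n" by (simp add: when_def)
  also have "a n = w0 * c ^ n" unfolding a_def pcn(2) by simp
  finally have HL: "Poly_Mapping.lookup H L = w0 * c ^ n" .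
  have nP: "w0 * c ^ n \<notin> P" by (rule prime_mult_notin[OF P w0(1) prime_power_notin[OF P c]])
  have Lk: "L \<in> Poly_Mapping.keys H" using HL nP prime_zero[OF P] by (auto simp: in_keys_iff)
  have "le E L" if E: "E \<in> Poly_Mapping.keys H" for E
  proof -
    from E have "Poly_Mapping.lookup H E \<noteq> 0" by (simp add: in_keys_iff)
    have "\<exists>k\<le>n. Poly_Mapping.single i (Suc k) = E"
    proof (rule ccontr)
      assume "\<not> (\<exists>k\<le>n. Poly_Mapping.single i (Suc k) = E)"
      then have "(\<Sum>k\<le>n. (a k when Poly_Mapping.single i (Suc k) = E)) = 0"
        by (intro sum.neutral) (auto simp: when_def)
      then show False using \<open>Poly_Mapping.lookup H E \<noteq> 0\<close> unfolding lookH by simp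
    qed
    then obtain k where "k \<le> n" "Poly_Mapping.single i (Suc k) = E" by blast
    then show ?thesis unfolding L_def using mo_single_mono[OF mo] by auto
  qed
  then have lmH: "lead_monom le H = L" by (intro lead_monom_eq[OF mo Lk]) blast
  have Hnz: "H \<noteq> 0" using Lk by auto
  have "init_term le H \<in> init_ideal le I"
    unfolding init_ideal_def using HI Hnz by (intro subsetD[OF ideal_of_sup]) blast
  then have "Poly_Mapping.single L (w0 * c ^ n) \<in> init_ideal le I"
    unfolding init_term_def lmH HL .
  then have "w0 * c ^ n \<in> coeff_ideal (init_ideal le I) L"
    unfolding coeff_ideal_def by (intro subsetD[OF ideal_of_sup]) blast
  then have "w0 * c ^ n \<in> coeff_ideal_inf (init_ideal le I) i"
    unfolding coeff_ideal_inf_def L_def by (intro UN_I[of "Suc n"]) auto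
  then show ?thesis by (rule ext_unit_intro[OF P _ nP])
qed

end


theorem proposition5p3:
  fixes le :: "('v::finite \<Rightarrow>\<^sub>0 nat) \<Rightarrow> ('v \<Rightarrow>\<^sub>0 nat) \<Rightarrow> bool"
    and I :: "('v, 'a::comm_ring_1) mpoly set"
    and P :: "'a set"
  assumes "noetherian_ring TYPE('a)"
    and "monomial_order le"
    and "is_ideal I"
    and "prime_ideal P"
  shows "loc_fin_gen const_smult I P \<longleftrightarrow>
         (\<forall>i. ext_ideal_unit (coeff_ideal_inf (init_ideal le I) i) P)"
proof
  assume "loc_fin_gen const_smult I P"
  then show "\<forall>i. ext_ideal_unit (coeff_ideal_inf (init_ideal le I) i) P"
    using fin_gen_imp[OF assms(2) assms(3) assms(4)] by blast
next
  assume H: "\<forall>i. ext_ideal_unit (coeff_ideal_inf (init_ideal le I) i) P"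
  have "\<forall>i. \<exists>fk. fst fk \<in> I \<and> fst fk \<noteq> 0 \<and> lead_monom le (fst fk) = Poly_Mapping.single i (snd fk)
          \<and> Poly_Mapping.lookup (fst fk) (lead_monom le (fst fk)) \<notin> P"
  proof
    fix i
    obtain j where j: "j \<in> coeff_ideal_inf (init_ideal le I) i" "j \<notin> P"
      using ext_unit_elem[OF assms(4)] H by blast
    obtain f k where fk: "f \<in> I" "f \<noteq> 0" "lead_monom le f = Poly_Mapping.single i k"
      "Poly_Mapping.lookup f (lead_monom le f) \<notin> P"
      using coeff_extract[OF assms(2) assms(3) assms(4) j] by blast
    then show "\<exists>fk. fst fk \<in> I \<and> fst fk \<noteq> 0 \<and> lead_monom le (fst fk) = Poly_Mapping.single i (snd fk)
          \<and> Poly_Mapping.lookup (fst fk) (lead_monom le (fst fk)) \<notin> P"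
      by (intro exI[of _ "(f, k)"]) simp
  qed
  from choice[OF this] obtain FK where FK: "\<forall>i. fst (FK i) \<in> I \<and> fst (FK i) \<noteq> 0 \<and> lead_monom le (fst (FK i)) = Poly_Mapping.single i (snd (FK i))
          \<and> Poly_Mapping.lookup (fst (FK i)) (lead_monom le (fst (FK i))) \<notin> P"
    by (elim exE) (rule that)
  define f where "f i = fst (FK i)" for i
  define k where "k i = snd (FK i)" for i
  have fI: "\<And>i. f i \<in> I" and fnz: "\<And>i. f i \<noteq> 0"
    and flm: "\<And>i. lead_monom le (f i) = Poly_Mapping.single i (k i)"
    using FK unfolding f_def k_def by blast+
  have flc: "\<And>i. Poly_Mapping.lookup (f i) (Poly_Mapping.single i (k i)) \<notin> P"
    using FK flm unfolding f_def k_def by metis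
  show "loc_fin_gen const_smult I P"
    by (rule fin_gen[OF assms(2) assms(3) assms(4) fI fnz flm flc])
qed

end
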